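(* Fix a block length $N>0$, transmission rates $R_1,R_2\ge 0$, transmit powers $P_1,P_2>0$ and noise powers $\sigma_1^2,\sigma_2^2>0$. For channel gains $g_1=|h_1|^2>0$ and $g_2=|h_2|^2>0$ define the SINRs/SNR $$\gamma_2^1=\frac{g_1P_2}{g_1P_1+\sigma_1^2},\qquad \gamma_1^1=\frac{g_1P_1}{\sigma_1^2},\qquad {\gamma_1^1}'=\frac{g_1P_1}{g_1P_2+\sigma_1^2},\qquad \gamma_2^2=\frac{g_2P_2}{g_2P_1+\sigma_2^2},$$ the (approximate) decoding error probabilities $$\epsilon_2^1=Q(f(\gamma_2^1,N,R_2)),\quad \epsilon_1^1=Q(f(\gamma_1^1,N,R_1)),\quad {\epsilon_1^1}'=Q(f({\gamma_1^1}',N,R_1)),\quad \epsilon_2=Q(f(\gamma_2^2,N,R_2)),$$ the effective decoding error probability at user 1 $$\epsilon_1=\begin{cases}\epsilon_1^1(1-\epsilon_2^1)+{\epsilon_1^1}'\epsilon_2^1, & R_1\le \log_2(1+{\gamma_1^1}'),\\ \epsilon_1^1(1-\epsilon_2^1)+\epsilon_2^1, & \log_2(1+{\gamma_1^1}')\le R_1\le \log_2(1+\gamma_1^1),\end{cases}$$ and the effective throughputs $T_1=R_1(1-\epsilon_1)$ and $T_2=R_2(1-\epsilon_2)$. Then, with all other variables fixed, $T_1$ is a monotonically increasing function of the channel gain $g_1=|h_1|^2$ (wherever $T_1$ is defined, i.e. $R_1\le\log_2(1+\gamma_1^1)$), and $T_2$ is a monotonically increasing function of the channel gain $g_2=|h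_2|^2$.
   Context: $Q(x)=\frac{1}{\sqrt{2\pi}}\int_x^\infty e^{-t^2/2}\,dt$ is the Gaussian tail function, and $f(x,y,z)=\ln 2\,\sqrt{\frac{y}{1-(1+x)^{-2}}}\,\bigl(\log_2(1+x)-z\bigr)$ for $x>0$. Setting: a two-user downlink NOMA short-packet system in which an access point sends superposed symbols with powers $P_1$ (to user 1, the stronger user, which performs successive interference cancellation) and $P_2$ (to user 2) at rates $R_1,R_2$ over blocks of length $N$; $h_i$ is the channel coefficient to user $i$ and $\sigma_i^2$ the noise power at user $i$. *)

theory Defs
  imports "HOL-Analysis.Analysis"
begin

definition Qfun :: "real \<Rightarrow> real" where
  "Qfun x = (1 / sqrt (2 * pi)) * integral {x..} (\<lambda>t. exp (- (t^2) / 2))"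

definition ffun :: "real \<Rightarrow> real \<Rightarrow> real \<Rightarrow> real" where
  "ffun x y z = ln 2 * sqrt (y / (1 - (1 + x) powr (-2))) * (log 2 (1 + x) - z)"

text \<open>SINRs/SNR; s1, s2 denote the noise powers sigma_1^2, sigma_2^2.\<close>
definition gamma21 :: "real \<Rightarrow> real \<Rightarrow> real \<Rightarrow> real \<Rightarrow> real" where
  "gamma21 g1 P1 P2 s1 = g1 * P2 / (g1 * P1 + s1)"
definition gamma11 :: "real \<Rightarrow> real \<Rightarrow> real \<Rightarrow> real" where
  "gamma11 g1 P1 s1 = g1 * P1 / s1"
definition gamma11' :: "real \<Rightarrow> real \<Rightarrow> real \<Rightarrow> real \<Rightarrow> real" where
  "gamma11' g1 P1 P2 s1 = g1 * P1 / (g1 * P2 + s1)"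
definition gamma22 :: "real \<Rightarrow> real \<Rightarrow> real \<Rightarrow> real \<Rightarrow> real" where
  "gamma22 g2 P1 P2 s2 = g2 * P2 / (g2 * P1 + s2)"

text \<open>Effective decoding error probability at user 1 (first case takes precedence
  on the boundary R1 = log2(1 + gamma11')).\<close>
definition eps1 :: "nat \<Rightarrow> real \<Rightarrow> real \<Rightarrow> real \<Rightarrow> real \<Rightarrow> real \<Rightarrow> real \<Rightarrow> real" where
  "eps1 N R1 R2 P1 P2 s1 g1 =
     (let e21 = Qfun (ffun (gamma21 g1 P1 P2 s1) (real N) R2);
          e11 = Qfun (ffun (gamma11 g1 P1 s1) (real N) R1);
          e11' = Qfun (ffun (gamma11' g1 P1 P2 s1) (real N) R1)
      in if R1 \<le> log 2 (1 + gamma11' g1 P1 P2 s1)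
         then e11 * (1 - e21) + e11' * e21
         else e11 * (1 - e21) + e21)"

definition eps2 :: "nat \<Rightarrow> real \<Rightarrow> real \<Rightarrow> real \<Rightarrow> real \<Rightarrow> real \<Rightarrow> real" where
  "eps2 N R2 P1 P2 s2 g2 = Qfun (ffun (gamma22 g2 P1 P2 s2) (real N) R2)"

definition T1 :: "nat \<Rightarrow> real \<Rightarrow> real \<Rightarrow> real \<Rightarrow> real \<Rightarrow> real \<Rightarrow> real \<Rightarrow> real" where
  "T1 N R1 R2 P1 P2 s1 g1 = R1 * (1 - eps1 N R1 R2 P1 P2 s1 g1)"

definition T2 :: "nat \<Rightarrow> real \<Rightarrow> real \<Rightarrow> real \<Rightarrow> real \<Rightarrow> real \<Rightarrow> real" where
  "T2 N R2 P1 P2 s2 g2 = R2 * (1 - eps2 N R2 P1 P2 s2 g2)"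

end

theory Submission imports Defs "HOL-Probability.Distributions" begin

lemma gauss_UNIV: "((\<lambda>t. exp (- (t^2) / 2)) has_integral sqrt (2*pi)) UNIV"
proof -
  have "has_bochner_integral lborel (\<lambda>x. std_normal_density x * x ^ (2*0)) (fact (2*0) / (2^0 * fact 0))"
    by (rule std_normal_moment_even)
  hence B: "has_bochner_integral lborel std_normal_density 1" by simp
  have "(std_normal_density has_integral 1) UNIV"
    using has_integral_integral_lborel B unfolding has_bochner_integral_iff by metis
  from has_integral_mult_right[OF this, of "sqrt (2*pi)"]
  show ?thesis by (simp add: std_normal_density_def)
qed

lemma gauss_int: "(\<lambda>t. exp (- (t^2) / 2)) integrable_on {x::real..}"
proof -
  have "(\<lambda>t. exp (- (t^2) / 2)) absolutely_integrable_on (UNIV::real set)"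
    using gauss_UNIV by (intro nonnegative_absolutely_integrable_1) auto
  hence "(\<lambda>t. exp (- (t^2) / 2)) absolutely_integrable_on {x..}"
    by (rule set_integrable_subset) auto
  thus ?thesis using set_lebesgue_integral_eq_integral(1) by blast
qed

lemma Q_props: "0 \<le> Qfun x \<and> Qfun x \<le> 1"
proof -
  have "0 \<le> integral {x..} (\<lambda>t. exp (- (t^2) / 2))"
    by (rule integral_nonneg[OF gauss_int]) auto
  moreover have "integral {x..} (\<lambda>t. exp (- (t^2) / 2)) \<le> integral UNIV (\<lambda>t. exp (- (t^2) / 2))"
    by (rule integral_subset_le) (use gauss_int gauss_UNIV in auto)
  ultimately show ?thesis using gauss_UNIV unfolding Qfun_def
    by (auto simp: integral_unique field_simps)
qed

lemma Q_anti: "x \<le> y \<Longrightarrow> Qfun y \<le> Qfun x"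
proof -
  assume "x \<le> y"
  have "integral {y..} (\<lambda>t. exp (- (t^2) / 2)) \<le> integral {x..} (\<lambda>t. exp (- (t^2) / 2))"
    by (rule integral_subset_le) (use gauss_int \<open>x \<le> y\<close> in auto)
  thus ?thesis unfolding Qfun_def by (simp add: divide_right_mono)
qed

lemma e0: fixes s L u :: real assumes "s > 0" "s * s = u^2 - 1"
  shows "((L + 1) * s - L * u * (u / s)) / (s * s) = (u^2-1-L)/((u^2-1) * s)"
proof -
  have "((L + 1) * s - L * u * (u / s)) = ((L+1) * (s * s) - L*u^2)/s" using assms(1)
    by (simp add: field_simps power2_eq_square)
  also have "... = (u^2-1-L)/s" proof - have "u^2 = s * s + 1" using assms(2) by simp thus ?thesis by (simp add: algebra_simps) qed
  finally show ?thesis unfolding assms(2)[symmetric] by (simp add: mult.commute)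
qed

lemma k_deriv: "(u::real) > 1 \<Longrightarrow> ((\<lambda>u. ln u * u / sqrt (u^2-1)) has_real_derivative (u^2-1-ln u)/((u^2-1)* sqrt(u^2-1))) (at u)"
proof -
  assume u: "u > 1"
  have p: "u^2 - 1 > 0" using less_1_mult[OF u u] by (simp add: power2_eq_square)
  have s: "sqrt (u^2-1) > 0" using p by simp
  have ss: "sqrt (u^2-1) * sqrt (u^2-1) = u^2-1" using p by simp
  have d1: "((\<lambda>u. sqrt(u^2-1)) has_real_derivative (u / sqrt(u^2-1))) (at u)"
  proof -
    have g: "((\<lambda>u. u^2-1) has_real_derivative 2*u) (at u)"
      by (rule derivative_eq_intros refl | simp)+
    have "inverse (sqrt (u^2-1)) / 2 * (2*u) = u / sqrt(u^2-1)" by (simp add: field_simps)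
    thus ?thesis using DERIV_chain2[OF DERIV_real_sqrt[OF p] g] by simp
  qed
  have d2: "((\<lambda>u. ln u * u) has_real_derivative (ln u + 1)) (at u)"
    using DERIV_mult[OF DERIV_ln[of u] DERIV_ident] u by (simp add: field_simps)
  have e: "((ln u + 1) * sqrt (u^2-1) - ln u * u * (u / sqrt(u^2-1))) / (sqrt (u^2-1) * sqrt (u^2-1))
     = (u^2-1-ln u)/((u^2-1) * sqrt(u^2-1))"
    using e0[OF s ss] by simp
  show ?thesis using DERIV_divide[OF d2 d1] s e by simp
qed


lemma k_pos: "(u::real) > 1 \<Longrightarrow> (u^2-1-ln u)/((u^2-1) * sqrt(u^2-1)) > 0"
proof -
  assume u: "u > 1"
  have p: "u^2 - 1 > 0" using less_1_mult[OF u u] by (simp add: power2_eq_square)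
  have "ln u \<le> u - 1" using ln_le_minus_one u by simp
  moreover have "u - 1 < u^2 - 1" using u by (simp add: power2_eq_square)
  ultimately have "u^2-1-ln u > 0" by simp
  thus ?thesis using p by simp
qed

lemma k_mono: "1 < (u::real) \<Longrightarrow> u \<le> v \<Longrightarrow> ln u * u / sqrt (u^2-1) \<le> ln v * v / sqrt (v^2-1)"
proof -
  assume u: "1 < u" and uv: "u \<le> v"
  show ?thesis
  proof (cases "u = v")
    case False
    hence "u < v" using uv by simp
    have "ln u * u / sqrt (u^2-1) < ln v * v / sqrt (v^2-1)"
      by (rule DERIV_pos_imp_increasing[OF \<open>u < v\<close>])
         (use k_deriv k_pos u in \<open>meson less_le_trans\<close>)
    thus ?thesis by simp
  qed simp
qed

lemma h_anti: "1 < (u::real) \<Longrightarrow> u \<le> v \<Longrightarrow> v / sqrt (v^2-1) \<le> u / sqrt (u^2-1)"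
proof -
  assume u: "1 < u" and uv: "u \<le> v"
  have pu: "u^2 - 1 > 0" using less_1_mult[OF u u] by (simp add: power2_eq_square)
  have v: "1 < v" using u uv by simp
  have pv: "v^2 - 1 > 0" using less_1_mult[OF v v] by (simp add: power2_eq_square)
  have hu: "u / sqrt (u^2-1) = sqrt (u^2/(u^2-1))" using u by (simp add: real_sqrt_divide)
  have hv: "v / sqrt (v^2-1) = sqrt (v^2/(v^2-1))" using v by (simp add: real_sqrt_divide)
  have "u^2 \<le> v^2" using u uv by (simp add: power_mono)
  hence "v^2/(v^2-1) \<le> u^2/(u^2-1)" using pu pv by (simp add: field_simps)
  thus ?thesis unfolding hu hv by simp
qed

lemma ffun_eq: "(x::real) > 0 \<Longrightarrow> y \<ge> 0 \<Longrightarrow>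
  ffun x y z = sqrt y * (ln (1+x) * (1+x) / sqrt ((1+x)^2-1) - z * ln 2 * ((1+x) / sqrt ((1+x)^2-1)))"
proof -
  assume x: "x > 0" and y: "y \<ge> 0"
  define u where "u = 1 + x"
  have u: "u > 1" using x u_def by simp
  have p: "u^2 - 1 > 0" using less_1_mult[OF u u] by (simp add: power2_eq_square)
  have "u powr (-2) = 1 / u^2" using u by (simp add: powr_minus powr_numeral inverse_eq_divide)
  hence "1 - u powr (-2) = (u^2-1)/u^2" using u by (simp add: field_simps)
  hence "sqrt (y / (1 - u powr (-2))) = sqrt y * u / sqrt (u^2-1)"
    using u p by (simp add: real_sqrt_divide real_sqrt_mult)
  moreover have "ln 2 * (log 2 u - z) = ln u - z * ln 2" by (simp add: log_def field_simps)
  ultimately have "ffun x y z = sqrt y * u / sqrt (u^2-1) * (ln u - z * ln 2)"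
    unfolding ffun_def u_def[symmetric] by (metis mult.commute mult.left_commute)
  thus ?thesis unfolding u_def[symmetric] by (simp add: diff_divide_distrib algebra_simps)
qed

lemma f_mono: "0 < (x::real) \<Longrightarrow> x \<le> x' \<Longrightarrow> y \<ge> 0 \<Longrightarrow> z \<ge> 0 \<Longrightarrow> ffun x y z \<le> ffun x' y z"
proof -
  assume x: "0 < x" and xx: "x \<le> x'" and y: "y \<ge> 0" and z: "z \<ge> 0"
  have x': "0 < x'" using x xx by simp
  have k: "ln (1+x) * (1+x) / sqrt ((1+x)^2-1) \<le> ln (1+x') * (1+x') / sqrt ((1+x')^2-1)"
    using k_mono[of "1+x" "1+x'"] x xx by simp
  have h: "(1+x') / sqrt ((1+x')^2-1) \<le> (1+x) / sqrt ((1+x)^2-1)"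
    using h_anti[of "1+x" "1+x'"] x xx by simp
  have "z * ln 2 \<ge> 0" using z by simp
  hence "z * ln 2 * ((1+x') / sqrt ((1+x')^2-1)) \<le> z * ln 2 * ((1+x) / sqrt ((1+x)^2-1))"
    by (rule mult_left_mono[OF h])
  hence "ln (1+x) * (1+x) / sqrt ((1+x)^2-1) - z * ln 2 * ((1+x) / sqrt ((1+x)^2-1))
     \<le> ln (1+x') * (1+x') / sqrt ((1+x')^2-1) - z * ln 2 * ((1+x') / sqrt ((1+x')^2-1))"
    using k by linarith
  thus ?thesis unfolding ffun_eq[OF x y] ffun_eq[OF x' y] by (rule mult_left_mono) (use y in simp)
qed

lemma eQ_anti: "0 < (x::real) \<Longrightarrow> x \<le> x' \<Longrightarrow> z \<ge> 0 \<Longrightarrow>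
   Qfun (ffun x' (real N) z) \<le> Qfun (ffun x (real N) z)"
  by (rule Q_anti, rule f_mono) auto

lemma frac_mono: "0 < (g::real) \<Longrightarrow> g \<le> g' \<Longrightarrow> A \<ge> 0 \<Longrightarrow> B \<ge> 0 \<Longrightarrow> s > 0 \<Longrightarrow>
   g*A/(g*B+s) \<le> g'*A/(g'*B+s)"
proof -
  assume g: "0 < g" "g \<le> g'" and A: "A \<ge> 0" and B: "B \<ge> 0" and s: "s > 0"
  have d1: "g*B+s > 0" using g B s by (simp add: add_nonneg_pos)
  have d2: "g'*B+s > 0" using g B s by (simp add: add_nonneg_pos)
  have "g*A * s \<le> g'*A * s" using g A s by (simp add: mult_right_mono)
  hence "g*A*(g'*B+s) \<le> g'*A*(g*B+s)" by (simp add: algebra_simps)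
  thus ?thesis using d1 d2 by (simp add: divide_simps)
qed

lemma comb: "(a'::real) \<le> a \<Longrightarrow> w' \<le> w \<Longrightarrow> c' \<le> c \<Longrightarrow> 0 \<le> w' \<Longrightarrow> w' \<le> 1 \<Longrightarrow> a \<le> c \<Longrightarrow>
   a'*(1-w') + c'*w' \<le> a*(1-w) + c*w"
proof -
  assume h: "a' \<le> a" "w' \<le> w" "c' \<le> c" "0 \<le> w'" "w' \<le> 1" "a \<le> c"
  have "a'*(1-w') \<le> a*(1-w')" using h by (simp add: mult_right_mono)
  moreover have "c'*w' \<le> c*w'" using h by (simp add: mult_right_mono)
  moreover have "0 \<le> (w-w')*(c-a)" using h by simp
  ultimately show ?thesis by (simp add: algebra_simps)
qed

theorem proposition1:
  fixes N :: nat and R1 R2 P1 P2 s1 s2 :: real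
  assumes "N > 0" and "R1 \<ge> 0" and "R2 \<ge> 0" and "P1 > 0" and "P2 > 0"
    and "s1 > 0" and "s2 > 0"
  shows "mono_on {g1. 0 < g1 \<and> R1 \<le> log 2 (1 + gamma11 g1 P1 s1)}
           (\<lambda>g1. T1 N R1 R2 P1 P2 s1 g1)
       \<and> mono_on {0<..} (\<lambda>g2. T2 N R2 P1 P2 s2 g2)"
proof
  note A = assms
  show "mono_on {0<..} (\<lambda>g2. T2 N R2 P1 P2 s2 g2)"
  proof (rule mono_onI)
    fix g g' :: real assume g: "g \<in> {0<..}" "g' \<in> {0<..}" "g \<le> g'"
    have p: "0 < gamma22 g P1 P2 s2" using g A unfolding gamma22_def
      by (simp add: add_pos_pos)
    have "gamma22 g P1 P2 s2 \<le> gamma22 g' P1 P2 s2" unfolding gamma22_def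
      using frac_mono[of g g' P2 P1 s2] g A by simp
    hence "eps2 N R2 P1 P2 s2 g' \<le> eps2 N R2 P1 P2 s2 g" unfolding eps2_def
      using eQ_anti[OF p] A by simp
    thus "T2 N R2 P1 P2 s2 g \<le> T2 N R2 P1 P2 s2 g'" unfolding T2_def
      using A by (simp add: mult_left_mono)
  qed
  show "mono_on {g1. 0 < g1 \<and> R1 \<le> log 2 (1 + gamma11 g1 P1 s1)} (\<lambda>g1. T1 N R1 R2 P1 P2 s1 g1)"
  proof (rule mono_onI)
    fix g g' :: real
    assume gs: "g \<in> {g1. 0 < g1 \<and> R1 \<le> log 2 (1 + gamma11 g1 P1 s1)}"
      "g' \<in> {g1. 0 < g1 \<and> R1 \<le> log 2 (1 + gamma11 g1 P1 s1)}" and gg: "g \<le> g'"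
    have g: "0 < g" "0 < g'" using gs by auto
    define e21 where "e21 x = Qfun (ffun (gamma21 x P1 P2 s1) (real N) R2)" for x
    define e11 where "e11 x = Qfun (ffun (gamma11 x P1 s1) (real N) R1)" for x
    define e11' where "e11' x = Qfun (ffun (gamma11' x P1 P2 s1) (real N) R1)" for x
    define cond where "cond x = (R1 \<le> log 2 (1 + gamma11' x P1 P2 s1))" for x
    define c where "c x = (if cond x then e11' x else 1)" for x
    have epsc: "eps1 N R1 R2 P1 P2 s1 x = e11 x * (1 - e21 x) + c x * e21 x" for x
      unfolding eps1_def e21_def e11_def e11'_def c_def cond_def Let_def by simp
    have pos: "0 < gamma21 x P1 P2 s1" "0 < gamma11 x P1 s1" "0 < gamma11' x P1 P2 s1" if "0 < x" for x
      using that A unfolding gamma21_def gamma11_def gamma11'_def by (simp_all add: add_pos_pos)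
    have m21: "gamma21 g P1 P2 s1 \<le> gamma21 g' P1 P2 s1" unfolding gamma21_def
      using frac_mono[of g g' P2 P1 s1] g gg A by simp
    have m11: "gamma11 g P1 s1 \<le> gamma11 g' P1 s1" unfolding gamma11_def
      using g gg A by (simp add: divide_right_mono mult_right_mono)
    have m11': "gamma11' g P1 P2 s1 \<le> gamma11' g' P1 P2 s1" unfolding gamma11'_def
      using frac_mono[of g g' P1 P2 s1] g gg A by simp
    have le11: "gamma11' g P1 P2 s1 \<le> gamma11 g P1 s1" unfolding gamma11'_def gamma11_def
      using g A by (intro frac_le) (simp_all add: add_pos_pos)
    have a1: "e11 g' \<le> e11 g" unfolding e11_def using eQ_anti[OF pos(2)[OF g(1)] m11] A by simp
    have w1: "e21 g' \<le> e21 g" unfolding e21_def using eQ_anti[OF pos(1)[OF g(1)] m21] A by simp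
    have b1: "e11' g' \<le> e11' g" unfolding e11'_def using eQ_anti[OF pos(3)[OF g(1)] m11'] A by simp
    have ab: "e11 g \<le> e11' g" unfolding e11_def e11'_def using eQ_anti[OF pos(3)[OF g(1)] le11] A by simp
    have w0: "0 \<le> e21 g'" "e21 g' \<le> 1" unfolding e21_def using Q_props by auto
    have e1: "e11 g \<le> 1" "e11' g' \<le> 1" unfolding e11_def e11'_def using Q_props by auto
    have condm: "cond g \<Longrightarrow> cond g'" unfolding cond_def
      using m11' pos(3)[OF g(1)] by (smt (verit) log_le_cancel_iff one_less_numeral_iff semiring_norm(76))
    have c1: "c g' \<le> c g" unfolding c_def using condm b1 e1 by auto
    have ac: "e11 g \<le> c g" unfolding c_def using ab e1 by auto
    have "eps1 N R1 R2 P1 P2 s1 g' \<le> eps1 N R1 R2 P1 P2 s1 g"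
      unfolding epsc by (rule comb[OF a1 w1 c1 w0 ac])
    thus "T1 N R1 R2 P1 P2 s1 g \<le> T1 N R1 R2 P1 P2 s1 g'" unfolding T1_def
      using A by (simp add: mult_left_mono)
  qed
qed

end
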